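(* For generic $u\in\mathbb{C}$ and generic $v,w\in\mathbb{C}$ (in particular with all entries defined), the following commutation relations hold: $$[M^{cl}(v),M^{cl}(w)]=0,\qquad [M^{q}(v),M^{q}(w)]=0 .$$
   Context: All matrices are $2N\times 2N$ complex matrices, indexed by $1,\dots,2N$. Entries not listed are zero, and only index pairs lying in $\{1,\dots,2N\}^2$ are meant. Here $\mathrm{i}$ is the imaginary unit, $\lambda_{cl}(v)=\tanh(v)\coth(u-v)$ and $\lambda_q(v)=\tanh(u-v)\coth(v)$. In all formulas $1\le i\le N$, $1\le j\le 2N$ and $k\ge 1$. The matrix $M^{cl}(v)$ is lower triangular, with entries - $M^{cl}_{2i-1,2i-1}=-\mathrm{i}\coth(u-v)$ and $M^{cl}_{2i,2i}=\mathrm{i}\tanh(v)$; - $M^{cl}_{2i-1+2k,\,2i-1}=-\mathrm{i}\,\lambda_{cl}^{k-1}/(\coth(v)\sinh^2(u-v))$; - $M^{cl}_{2i+2k,\,2i}=-\mathrm{i}\,\lambda_{cl}^{k-1}/(\tanh(u-v)\cosh^2(v))$; - $M^{cl}_{j+2k-1,\,j}=-\mathrm{i}\,\lambda_{cl}^{k-1}/(\cosh(v)\sinh(u-v))$. The matrix $M^{q}(v)$ is upper triangular, with entries - $M^{q}_{2i-1,2i-1}=-\mathrm{i}\tanh(u-v)$ and $M^{q}_{2i,2i}=\mathrm{i}\coth(v)$; - $M^{q}_{2i-1,\,2i-1+2k}=\mathrm{i}\,\lambda_q^{k-1}/(\tanh(v)\cosh^2(u-v))$; - $M^{q}_{2i,\,2i+2k}=\mathrm{i}\,\lambda_q^{k-1}/(\coth(u-v)\sinh^2(v))$;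 - $M^{q}_{j,\,j+2k-1}=\mathrm{i}\,\lambda_q^{k-1}/(\sinh(v)\cosh(u-v))$. The matrices $M^{cl}(w)$ and $M^{q}(w)$ are defined by the same formulas with $v$ replaced by $w$. *)

theory Defs
  imports Complex_Main "Jordan_Normal_Form.Matrix"
begin

definition coth :: "complex \<Rightarrow> complex" where
  "coth z = cosh z / sinh z"

definition lam_cl :: "complex \<Rightarrow> complex \<Rightarrow> complex" where
  "lam_cl u v = tanh v * coth (u - v)"

definition lam_q :: "complex \<Rightarrow> complex \<Rightarrow> complex" where
  "lam_q u v = tanh (u - v) * coth v"

text \<open>Entries of M^cl(v), with 1-based row index a and column index b (1 \<le> a,b \<le> 2N).\<close>
definition Mcl_entry :: "complex \<Rightarrow> complex \<Rightarrow> nat \<Rightarrow> nat \<Rightarrow> complex" where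
  "Mcl_entry u v a b =
    (if a = b then (if odd b then - \<i> * coth (u - v) else \<i> * tanh v)
     else if b < a then
       (let d = a - b in
        if odd d then - \<i> * lam_cl u v ^ ((d + 1) div 2 - 1) / (cosh v * sinh (u - v))
        else if odd b then - \<i> * lam_cl u v ^ (d div 2 - 1) / (coth v * sinh (u - v) ^ 2)
        else - \<i> * lam_cl u v ^ (d div 2 - 1) / (tanh (u - v) * cosh v ^ 2))
     else 0)"

definition Mq_entry :: "complex \<Rightarrow> complex \<Rightarrow> nat \<Rightarrow> nat \<Rightarrow> complex" where
  "Mq_entry u v a b =
    (if a = b then (if odd a then - \<i> * tanh (u - v) else \<i> * coth v)
     else if a < b then
       (let d = b - a in
        if odd d then \<i> * lam_q u v ^ ((d + 1) div 2 - 1) / (sinh v * cosh (u - v))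
        else if odd a then \<i> * lam_q u v ^ (d div 2 - 1) / (tanh v * cosh (u - v) ^ 2)
        else \<i> * lam_q u v ^ (d div 2 - 1) / (coth (u - v) * sinh v ^ 2))
     else 0)"

text \<open>The 2N x 2N matrices (Jordan_Normal_Form uses 0-based indices, hence the shift).\<close>
definition Mcl :: "nat \<Rightarrow> complex \<Rightarrow> complex \<Rightarrow> complex mat" where
  "Mcl N u v = mat (2 * N) (2 * N) (\<lambda>(r, c). Mcl_entry u v (r + 1) (c + 1))"

definition Mq :: "nat \<Rightarrow> complex \<Rightarrow> complex \<Rightarrow> complex mat" where
  "Mq N u v = mat (2 * N) (2 * N) (\<lambda>(r, c). Mq_entry u v (r + 1) (c + 1))"

end

theory Submission
  imports Defs
begin

definition Sm :: "nat \<Rightarrow> complex mat" where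
  "Sm n = mat n n (\<lambda>(i,j). if i = j + 2 then 1 else 0)"

lemma Sm_carrier[simp]: "Sm n \<in> carrier_mat n n" by (simp add: Sm_def)
lemma Sm_dim[simp]: "dim_row (Sm n) = n" "dim_col (Sm n) = n" by (simp_all add: Sm_def)

lemma S_mult_idx:
  assumes A: "A \<in> carrier_mat n m" and i: "i < n" and j: "j < m"
  shows "(Sm n * A) $$ (i,j) = (if 2 \<le> i then A $$ (i-2,j) else 0)"
proof -
  have "(Sm n * A) $$ (i,j) = (\<Sum>k<n. (if i = k + 2 then 1 else 0) * A $$ (k,j))"
    using A i j by (auto simp: Sm_def scalar_prod_def lessThan_atLeast0 intro!: sum.cong)
  also have "\<dots> = (\<Sum>k<n. if k = i - 2 \<and> 2 \<le> i then A $$ (k,j) else 0)"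
    by (rule sum.cong) auto
  also have "\<dots> = (if 2 \<le> i then A $$ (i-2,j) else 0)"
    using i by (auto simp: sum.delta)
  finally show ?thesis .
qed

lemma mult_S_idx:
  assumes A: "A \<in> carrier_mat m n" and i: "i < m" and j: "j < n"
  shows "(A * Sm n) $$ (i,j) = (if j + 2 < n then A $$ (i,j+2) else 0)"
proof -
  have "(A * Sm n) $$ (i,j) = (\<Sum>k<n. A $$ (i,k) * (if k = j + 2 then 1 else 0))"
    using A i j by (auto simp: Sm_def scalar_prod_def lessThan_atLeast0 intro!: sum.cong)
  also have "\<dots> = (\<Sum>k<n. if k = j + 2 then A $$ (i,k) else 0)"
    by (rule sum.cong) auto
  also have "\<dots> = (if j + 2 < n then A $$ (i,j+2) else 0)"
    by (simp add: sum.delta)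
  finally show ?thesis .
qed

lemma shift_comm:
  assumes inv: "\<And>i j. f (i+2) (j+2) = f i j" and up: "\<And>i j. i < j \<Longrightarrow> f i j = 0"
  shows "Sm n * mat n n (\<lambda>(i,j). f i j) = mat n n (\<lambda>(i,j). f i j) * Sm n"
proof (rule eq_matI)
  fix i j assume i: "i < dim_row (mat n n (\<lambda>(i,j). f i j) * Sm n)"
    and j: "j < dim_col (mat n n (\<lambda>(i,j). f i j) * Sm n)"
  hence i: "i < n" and j: "j < n" by (auto simp: Sm_def)
  have ii: "2 \<le> i \<Longrightarrow> f i (j+2) = f (i-2) j" by (metis inv le_add_diff_inverse2)
  show "(Sm n * mat n n (\<lambda>(i,j). f i j)) $$ (i,j) = (mat n n (\<lambda>(i,j). f i j) * Sm n) $$ (i,j)"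
    using i j ii up[of "i-2" j] up[of i "j+2"]
    by (simp del: index_mult_mat add: index_mult_mat(2,3) S_mult_idx[OF mat_carrier] mult_S_idx[OF mat_carrier])
qed auto

lemma cancel:
  assumes X: "X \<in> carrier_mat n n" and Y: "Y \<in> carrier_mat n n"
    and eq: "X - l \<cdot>\<^sub>m (Sm n * X) = Y - l \<cdot>\<^sub>m (Sm n * Y)"
  shows "X = Y"
proof (rule eq_matI)
  have e: "X $$ (i,j) - l * (if 2 \<le> i then X $$ (i-2,j) else 0) =
           Y $$ (i,j) - l * (if 2 \<le> i then Y $$ (i-2,j) else 0)" if "i < n" "j < n" for i j
  proof -
    have "(X - l \<cdot>\<^sub>m (Sm n * X)) $$ (i,j) = (Y - l \<cdot>\<^sub>m (Sm n * Y)) $$ (i,j)" using eq by simp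
    thus ?thesis using X Y that by (simp del: index_mult_mat add: index_mult_mat(2,3) S_mult_idx[OF X] S_mult_idx[OF Y] split: if_splits)
  qed
  have "\<forall>j<n. i < n \<longrightarrow> X $$ (i,j) = Y $$ (i,j)" for i
  proof (induction i rule: less_induct)
    case (less i)
    show ?case
    proof (intro allI impI)
      fix j assume j: "j < n" and i: "i < n"
      show "X $$ (i,j) = Y $$ (i,j)"
      proof (cases "2 \<le> i")
        case True
        with less j i have "X $$ (i-2,j) = Y $$ (i-2,j)" by auto
        with e[OF i j] True show ?thesis by simp
      next
        case False
        with e[OF i j] show ?thesis by simp
      qed
    qed
  qed
  thus "\<And>i j. i < dim_row Y \<Longrightarrow> j < dim_col Y \<Longrightarrow> X $$ (i, j) = Y $$ (i, j)"
    using Y by auto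
qed (use X Y in auto)

lemma shift_left:
  assumes A: "A \<in> carrier_mat n n" and B: "B \<in> carrier_mat n n"
    and P: "P = A - l \<cdot>\<^sub>m (Sm n * A)"
  shows "A * B - l \<cdot>\<^sub>m (Sm n * (A * B)) = P * B"
proof -
  have SA: "Sm n * A \<in> carrier_mat n n" by (rule mult_carrier_mat[OF Sm_carrier A])
  have "P * B = A * B - (l \<cdot>\<^sub>m (Sm n * A)) * B"
    unfolding P by (rule minus_mult_distrib_mat[OF A smult_carrier_mat[OF SA] B])
  also have "(l \<cdot>\<^sub>m (Sm n * A)) * B = l \<cdot>\<^sub>m ((Sm n * A) * B)"
    by (rule mult_smult_assoc_mat[OF SA B])
  also have "(Sm n * A) * B = Sm n * (A * B)"
    by (rule assoc_mult_mat[OF Sm_carrier A B])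
  finally show ?thesis by simp
qed

lemma shift_right:
  assumes A: "A \<in> carrier_mat n n" and B: "B \<in> carrier_mat n n"
    and P: "P = A - l \<cdot>\<^sub>m (Sm n * A)" and SB: "Sm n * B = B * Sm n"
  shows "B * A - l \<cdot>\<^sub>m (Sm n * (B * A)) = B * P"
proof -
  have SA: "Sm n * A \<in> carrier_mat n n" by (rule mult_carrier_mat[OF Sm_carrier A])
  have "B * P = B * A - B * (l \<cdot>\<^sub>m (Sm n * A))"
    unfolding P by (rule mult_minus_distrib_mat[OF B A smult_carrier_mat[OF SA]])
  also have "B * (l \<cdot>\<^sub>m (Sm n * A)) = l \<cdot>\<^sub>m (B * (Sm n * A))"
    by (rule mult_smult_distrib[OF B SA])
  also have "B * (Sm n * A) = (B * Sm n) * A"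
    by (rule assoc_mult_mat[OF B Sm_carrier A, symmetric])
  also have "\<dots> = Sm n * (B * A)"
    unfolding SB[symmetric] by (rule assoc_mult_mat[OF Sm_carrier B A])
  finally show ?thesis by simp
qed

lemma smult_smult_mat: "a \<cdot>\<^sub>m (b \<cdot>\<^sub>m A) = (a * b :: complex) \<cdot>\<^sub>m A"
  by (rule eq_matI) auto

lemma lincomb_comm:
  assumes A: "A \<in> carrier_mat n n" and B: "B \<in> carrier_mat n n" and AB: "A * B = B * A"
  shows "(a \<cdot>\<^sub>m A + b \<cdot>\<^sub>m B) * (a' \<cdot>\<^sub>m A + b' \<cdot>\<^sub>m B) =
         (a' \<cdot>\<^sub>m A + b' \<cdot>\<^sub>m B) * (a \<cdot>\<^sub>m A + (b::complex) \<cdot>\<^sub>m B)"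
proof -
  have X: "(a \<cdot>\<^sub>m A + b \<cdot>\<^sub>m B) * (a' \<cdot>\<^sub>m A + b' \<cdot>\<^sub>m B) =
    a \<cdot>\<^sub>m (a' \<cdot>\<^sub>m (A*A) + b' \<cdot>\<^sub>m (A*B)) + b \<cdot>\<^sub>m (a' \<cdot>\<^sub>m (B*A) + b' \<cdot>\<^sub>m (B*B))"
    for a b a' b' :: complex
  proof -
    have C: "a' \<cdot>\<^sub>m A + b' \<cdot>\<^sub>m B \<in> carrier_mat n n" using A B by auto
    have "(a \<cdot>\<^sub>m A + b \<cdot>\<^sub>m B) * (a' \<cdot>\<^sub>m A + b' \<cdot>\<^sub>m B) =
       (a \<cdot>\<^sub>m A) * (a' \<cdot>\<^sub>m A + b' \<cdot>\<^sub>m B) + (b \<cdot>\<^sub>m B) * (a' \<cdot>\<^sub>m A + b' \<cdot>\<^sub>m B)"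
      using A B C by (intro add_mult_distrib_mat[of _ n n]) auto
    also have "\<dots> = a \<cdot>\<^sub>m (A * (a' \<cdot>\<^sub>m A + b' \<cdot>\<^sub>m B)) + b \<cdot>\<^sub>m (B * (a' \<cdot>\<^sub>m A + b' \<cdot>\<^sub>m B))"
      using A B C by (simp add: mult_smult_assoc_mat[OF A C] mult_smult_assoc_mat[OF B C])
    also have "A * (a' \<cdot>\<^sub>m A + b' \<cdot>\<^sub>m B) = A * (a' \<cdot>\<^sub>m A) + A * (b' \<cdot>\<^sub>m B)"
      using A B by (intro mult_add_distrib_mat[of _ n n]) auto
    also have "B * (a' \<cdot>\<^sub>m A + b' \<cdot>\<^sub>m B) = B * (a' \<cdot>\<^sub>m A) + B * (b' \<cdot>\<^sub>m B)"
      using A B by (intro mult_add_distrib_mat[of _ n n]) auto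
    finally show ?thesis using A B by (simp add: mult_smult_distrib[of _ n n])
  qed
  show ?thesis unfolding X AB
    by (rule eq_matI) (use A B in \<open>auto simp del: index_mult_mat simp add: index_mult_mat(2,3) algebra_simps\<close>)
qed



definition Gent :: "complex \<Rightarrow> complex \<Rightarrow> complex \<Rightarrow> complex \<Rightarrow> complex \<Rightarrow> complex \<Rightarrow> nat \<Rightarrow> nat \<Rightarrow> complex" where
  "Gent x y c c1 c2 l i j = (if i = j then (if even j then x else y)
     else if j < i then (if odd (i - j) then c * l ^ ((i - j + 1) div 2 - 1)
       else if even j then c1 * l ^ ((i - j) div 2 - 1) else c2 * l ^ ((i - j) div 2 - 1))
     else 0)"

definition Kent :: "complex \<Rightarrow> nat \<Rightarrow> nat \<Rightarrow> complex" where
  "Kent C i j = (if i = j then (if even j then C else 0) else if i = j + 1 then 1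
     else if i = j + 2 then (if odd j then C else 0) else 0)"

definition Pent :: "complex \<Rightarrow> complex \<Rightarrow> complex \<Rightarrow> nat \<Rightarrow> nat \<Rightarrow> complex" where
  "Pent y c C i j = y * ((if i = j then 1 else 0) + (if i = j + 2 then 1 else 0)) + c * Kent C i j"

lemma Gent_inv: "Gent x y c c1 c2 l (i+2) (j+2) = Gent x y c c1 c2 l i j"
  by (simp add: Gent_def)
lemma Gent_up: "i < j \<Longrightarrow> Gent x y c c1 c2 l i j = 0"
  by (simp add: Gent_def)
lemma Kent_inv: "Kent C (i+2) (j+2) = Kent C i j"
  by (simp add: Kent_def)
lemma Kent_up: "i < j \<Longrightarrow> Kent C i j = 0"
  by (simp add: Kent_def)
lemma Pent_inv: "Pent y c C (i+2) (j+2) = Pent y c C i j"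
  by (simp add: Pent_def Kent_def)
lemma Pent_up: "i < j \<Longrightarrow> Pent y c C i j = 0"
  by (simp add: Pent_def Kent_up)

lemma Gent_shift:
  assumes m: "1 \<le> m"
  shows "Gent x y c c1 c2 l (j+2+m) j = l * Gent x y c c1 c2 l (j+m) j"
proof (cases "odd m")
  case True
  have e: "(m + 2 + 1) div 2 - 1 = Suc ((m + 1) div 2 - 1)" using m True by (auto elim!: oddE)
  have "j + 2 + m - j = m + 2" "j + m - j = m" by auto
  then show ?thesis using True m e by (simp add: Gent_def)
next
  case False
  then have m2: "2 \<le> m" using m by (auto elim!: evenE)
  have e: "(m + 2) div 2 - 1 = Suc (m div 2 - 1)" using m2 False by (auto elim!: evenE)
  have e2: "l ^ (m div 2) = l * l ^ (m div 2 - 1)"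
  proof -
    have "m div 2 = Suc (m div 2 - 1)" using m2 by (auto elim!: evenE)
    then show ?thesis by (metis power_Suc)
  qed
  have "j + 2 + m - j = m + 2" "j + m - j = m" by auto
  then show ?thesis using False m e e2 by (simp add: Gent_def)
qed

lemma PG_pt:
  assumes h: "c1 - l*x = y" "c2 - l*y = x" "x - y = c*C"
  shows "Gent x y c c1 c2 l i j - l * (if 2 \<le> i then Gent x y c c1 c2 l (i-2) j else 0) = Pent y c C i j"
proof -
  have h1: "c1 = y + l*x" using h(1) by (metis diff_add_cancel)
  have h2: "c2 = x + l*y" using h(2) by (metis diff_add_cancel)
  have h3: "x = y + c*C" using h(3) by (metis diff_add_cancel add.commute)
  have "i < j \<or> i = j \<or> i = j + 1 \<or> i = j + 2 \<or> (\<exists>m. 1 \<le> m \<and> i = j + 2 + m)"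
    by presburger
  then consider "i < j" | "i = j" | "i = j + 1" | "i = j + 2" | m where "1 \<le> m" "i = j + 2 + m"
    by blast
  then show ?thesis
  proof cases
    case 1
    have z: "Gent x y c c1 c2 l (i-2) j = 0" using 1 by (intro Gent_up) auto
    have g: "Gent x y c c1 c2 l i j = 0" using 1 by (intro Gent_up) auto
    have p: "Pent y c C i j = 0" using 1 by (intro Pent_up) auto
    show ?thesis unfolding z g p by simp
  next
    case 2
    have z: "2 \<le> i \<Longrightarrow> Gent x y c c1 c2 l (i-2) j = 0" using 2 by (intro Gent_up) auto
    have g: "Gent x y c c1 c2 l i j = (if even j then x else y)" using 2 by (simp add: Gent_def)
    have p: "Pent y c C i j = y + (if even j then c * C else 0)" using 2 by (simp add: Pent_def Kent_def)
    show ?thesis by (cases "2 \<le> i") (simp_all only: z g p if_True if_False, simp_all add: h3)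
  next
    case 3
    have z: "2 \<le> i \<Longrightarrow> Gent x y c c1 c2 l (i-2) j = 0" using 3 by (intro Gent_up) auto
    have g: "Gent x y c c1 c2 l i j = c" using 3 by (simp add: Gent_def)
    have p: "Pent y c C i j = c" using 3 by (simp add: Pent_def Kent_def)
    show ?thesis by (cases "2 \<le> i") (simp_all only: z g p if_True if_False, simp_all)
  next
    case 4
    have g: "Gent x y c c1 c2 l i j = (if even j then c1 else c2)" using 4 by (simp add: Gent_def)
    have g2: "Gent x y c c1 c2 l (i-2) j = (if even j then x else y)" using 4 by (simp add: Gent_def)
    have p: "Pent y c C i j = y + (if odd j then c * C else 0)" using 4 by (simp add: Pent_def Kent_def)
    have i2: "2 \<le> i" using 4 by simp
    show ?thesis unfolding g g2 p if_P[OF i2] by (simp add: h1 h2 h3)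
  next
    case 5
    have i2: "2 \<le> i" and ie: "i - 2 = j + m" using 5 by auto
    have a: "Gent x y c c1 c2 l i j = l * Gent x y c c1 c2 l (i-2) j"
      unfolding ie by (simp only: 5(2) Gent_shift[OF 5(1)])
    have p: "Pent y c C i j = 0" using 5 by (simp add: Pent_def Kent_def)
    show ?thesis unfolding if_P[OF i2] a p by simp
  qed
qed



abbreviation GM where "GM n x y c c1 c2 l \<equiv> mat n n (\<lambda>(i,j). Gent x y c c1 c2 l i j)"
abbreviation KM where "KM n C \<equiv> mat n n (\<lambda>(i,j). Kent C i j)"
abbreviation PM where "PM n y c C \<equiv> mat n n (\<lambda>(i,j). Pent y c C i j)"

lemma PG:
  assumes h: "c1 - l*x = y" "c2 - l*y = x" "x - y = c*C"
  shows "PM n y c C = GM n x y c c1 c2 l - l \<cdot>\<^sub>m (Sm n * GM n x y c c1 c2 l)"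
proof (rule eq_matI)
  fix i j assume "i < dim_row (GM n x y c c1 c2 l - l \<cdot>\<^sub>m (Sm n * GM n x y c c1 c2 l))"
    "j < dim_col (GM n x y c c1 c2 l - l \<cdot>\<^sub>m (Sm n * GM n x y c c1 c2 l))"
  hence i: "i < n" and j: "j < n" by auto
  show "PM n y c C $$ (i,j) = (GM n x y c c1 c2 l - l \<cdot>\<^sub>m (Sm n * GM n x y c c1 c2 l)) $$ (i,j)"
    using i j PG_pt[OF h, of i j]
    by (cases "2 \<le> i") (simp_all del: index_mult_mat add: index_mult_mat(2,3) S_mult_idx[OF mat_carrier])
qed auto

lemma PM_decomp: "PM n y c C = y \<cdot>\<^sub>m (1\<^sub>m n + Sm n) + c \<cdot>\<^sub>m KM n C"
  by (rule eq_matI) (auto simp: Pent_def Sm_def)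

lemma SK: "Sm n * KM n C = KM n C * Sm n"
  by (rule shift_comm) (auto simp: Kent_inv[simplified] Kent_up)

lemma TK: "(1\<^sub>m n + Sm n) * KM n C = KM n C * (1\<^sub>m n + Sm n)"
proof -
  have "(1\<^sub>m n + Sm n) * KM n C = 1\<^sub>m n * KM n C + Sm n * KM n C"
    by (rule add_mult_distrib_mat[of _ n n]) auto
  also have "\<dots> = KM n C * 1\<^sub>m n + KM n C * Sm n" using SK by simp
  also have "\<dots> = KM n C * (1\<^sub>m n + Sm n)"
    by (rule mult_add_distrib_mat[of _ n n, symmetric]) auto
  finally show ?thesis .
qed

lemma PP: "PM n y c C * PM n y' c' C = PM n y' c' C * PM n y c C"
  unfolding PM_decomp by (rule lincomb_comm[OF _ _ TK]) auto

theorem gen_comm: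
  assumes h: "c1 - l*x = y" "c2 - l*y = x" "x - y = c*C"
    and h': "c1' - l'*x' = y'" "c2' - l'*y' = x'" "x' - y' = c'*C"
  shows "GM n x y c c1 c2 l * GM n x' y' c' c1' c2' l' = GM n x' y' c' c1' c2' l' * GM n x y c c1 c2 l"
proof -
  let ?G = "GM n x y c c1 c2 l" and ?G' = "GM n x' y' c' c1' c2' l'"
  let ?P = "PM n y c C" and ?P' = "PM n y' c' C"
  have G: "?G \<in> carrier_mat n n" and G': "?G' \<in> carrier_mat n n"
    and P: "?P \<in> carrier_mat n n" and P': "?P' \<in> carrier_mat n n" by auto
  have SG': "Sm n * ?G' = ?G' * Sm n"
    by (rule shift_comm) (auto simp: Gent_inv[simplified] Gent_up)
  have SP: "Sm n * ?P = ?P * Sm n"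
    by (rule shift_comm) (auto simp: Pent_inv[simplified] Pent_up)
  have E1: "?G * ?G' - l \<cdot>\<^sub>m (Sm n * (?G * ?G')) = ?P * ?G'"
    by (rule shift_left[OF G G' PG[OF h]])
  have E2: "?G' * ?G - l \<cdot>\<^sub>m (Sm n * (?G' * ?G)) = ?G' * ?P"
    by (rule shift_right[OF G G' PG[OF h] SG'])
  have E3: "?P * ?G' - l' \<cdot>\<^sub>m (Sm n * (?P * ?G')) = ?P * ?P'"
    by (rule shift_right[OF G' P PG[OF h'] SP])
  have E4: "?G' * ?P - l' \<cdot>\<^sub>m (Sm n * (?G' * ?P)) = ?P' * ?P"
    by (rule shift_left[OF G' P PG[OF h']])
  have "?P * ?G' = ?G' * ?P"
    by (rule cancel[OF mult_carrier_mat[OF P G'] mult_carrier_mat[OF G' P], where l = l'])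
      (unfold E3 E4, rule PP)
  then show ?thesis
    by (intro cancel[OF mult_carrier_mat[OF G G'] mult_carrier_mat[OF G' G], where l = l])
      (unfold E1 E2)
qed



lemma cl_id1:
  fixes a b p q :: complex
  assumes "a \<noteq> 0" "b \<noteq> 0" "p \<noteq> 0" "q \<noteq> 0" "q^2 = p^2 + 1"
  shows "- \<i> / ((b/a) * p^2) - ((a/b)*(q/p)) * (- \<i> * (q/p)) = \<i> * (a/b)"
proof -
  have "- \<i> / ((b/a) * p^2) - ((a/b)*(q/p)) * (- \<i> * (q/p)) = \<i> * a * (q^2 - 1) / (b * p^2)"
    using assms(1-4) by (simp add: field_simps power2_eq_square)
  also have "\<dots> = \<i> * (a/b)" using assms by (simp add: field_simps power2_eq_square)
  finally show ?thesis .
qed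

lemma cl_id2:
  fixes a b p q :: complex
  assumes "a \<noteq> 0" "b \<noteq> 0" "p \<noteq> 0" "q \<noteq> 0" "b^2 = a^2 + 1"
  shows "- \<i> / ((p/q) * b^2) - ((a/b)*(q/p)) * (\<i> * (a/b)) = - \<i> * (q/p)"
proof -
  have "- \<i> / ((p/q) * b^2) - ((a/b)*(q/p)) * (\<i> * (a/b)) = - \<i> * q * (1 + a^2) / (p * b^2)"
    using assms(1-4) by (simp add: field_simps power2_eq_square)
  also have "\<dots> = - \<i> * q * b^2 / (p * b^2)" using assms(5) by (simp add: add.commute)
  also have "\<dots> = - \<i> * (q/p)" using assms(1-4) by (simp add: field_simps power2_eq_square)
  finally show ?thesis .
qed

lemma cl_id3:
  fixes a b p q :: complex
  assumes "a \<noteq> 0" "b \<noteq> 0" "p \<noteq> 0" "q \<noteq> 0"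
  shows "- \<i> * (q/p) - \<i> * (a/b) = (- \<i> / (b * p)) * (q * b + p * a)"
  using assms by (simp add: field_simps)

lemma q_id1:
  fixes a b p q :: complex
  assumes "a \<noteq> 0" "b \<noteq> 0" "p \<noteq> 0" "q \<noteq> 0" "q^2 = p^2 + 1"
  shows "\<i> / ((a/b) * q^2) - ((p/q)*(b/a)) * (- \<i> * (p/q)) = \<i> * (b/a)"
proof -
  have "\<i> / ((a/b) * q^2) - ((p/q)*(b/a)) * (- \<i> * (p/q)) = \<i> * b * (1 + p^2) / (a * q^2)"
    using assms(1-4) by (simp add: field_simps power2_eq_square)
  also have "\<dots> = \<i> * b * q^2 / (a * q^2)" using assms(5) by (simp add: add.commute)
  also have "\<dots> = \<i> * (b/a)" using assms(1-4) by (simp add: field_simps power2_eq_square)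
  finally show ?thesis .
qed

lemma q_id2:
  fixes a b p q :: complex
  assumes "a \<noteq> 0" "b \<noteq> 0" "p \<noteq> 0" "q \<noteq> 0" "b^2 = a^2 + 1"
  shows "\<i> / ((q/p) * a^2) - ((p/q)*(b/a)) * (\<i> * (b/a)) = - \<i> * (p/q)"
proof -
  have "\<i> / ((q/p) * a^2) - ((p/q)*(b/a)) * (\<i> * (b/a)) = \<i> * p * (1 - b^2) / (q * a^2)"
    using assms(1-4) by (simp add: field_simps power2_eq_square)
  also have "\<dots> = - \<i> * (p/q)" using assms by (simp add: field_simps power2_eq_square)
  finally show ?thesis .
qed

lemma q_id3:
  fixes a b p q :: complex
  assumes "a \<noteq> 0" "b \<noteq> 0" "p \<noteq> 0" "q \<noteq> 0"
  shows "- \<i> * (p/q) - \<i> * (b/a) = (\<i> / (a * q)) * (- (q * b + p * a))"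
  using assms by (simp add: field_simps)



lemma Mcl_G:
  "Mcl N u v = GM (2*N) (- \<i> * coth (u - v)) (\<i> * tanh v) (- \<i> / (cosh v * sinh (u - v)))
     (- \<i> / (coth v * sinh (u - v) ^ 2)) (- \<i> / (tanh (u - v) * cosh v ^ 2)) (lam_cl u v)"
  unfolding Mcl_def
  by (rule eq_matI) (auto simp: Mcl_entry_def Gent_def Let_def)

lemma Mq_G:
  "transpose_mat (Mq N u v) = GM (2*N) (- \<i> * tanh (u - v)) (\<i> * coth v) (\<i> / (sinh v * cosh (u - v)))
     (\<i> / (tanh v * cosh (u - v) ^ 2)) (\<i> / (coth (u - v) * sinh v ^ 2)) (lam_q u v)"
  unfolding Mq_def
  by (rule eq_matI) (auto simp: Mq_entry_def Gent_def Let_def)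

lemma cl_conds:
  assumes "sinh v \<noteq> 0" "cosh v \<noteq> 0" "sinh (u - v) \<noteq> 0" "cosh (u - v) \<noteq> 0"
  shows "- \<i> / (coth v * sinh (u - v) ^ 2) - lam_cl u v * (- \<i> * coth (u - v)) = \<i> * tanh v"
    "- \<i> / (tanh (u - v) * cosh v ^ 2) - lam_cl u v * (\<i> * tanh v) = - \<i> * coth (u - v)"
    "- \<i> * coth (u - v) - \<i> * tanh v = (- \<i> / (cosh v * sinh (u - v))) * cosh u"
proof -
  have cu: "cosh u = cosh (u - v) * cosh v + sinh (u - v) * sinh v"
    using cosh_add[of "u - v" v] by simp
  show "- \<i> / (coth v * sinh (u - v) ^ 2) - lam_cl u v * (- \<i> * coth (u - v)) = \<i> * tanh v"
    unfolding coth_def lam_cl_def tanh_def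
    by (rule cl_id1[OF assms]) (simp add: cosh_square_eq)
  show "- \<i> / (tanh (u - v) * cosh v ^ 2) - lam_cl u v * (\<i> * tanh v) = - \<i> * coth (u - v)"
    unfolding coth_def lam_cl_def tanh_def
    by (rule cl_id2[OF assms]) (simp add: cosh_square_eq)
  show "- \<i> * coth (u - v) - \<i> * tanh v = (- \<i> / (cosh v * sinh (u - v))) * cosh u"
    unfolding coth_def tanh_def cu
    by (rule cl_id3[OF assms])
qed

lemma q_conds:
  assumes "sinh v \<noteq> 0" "cosh v \<noteq> 0" "sinh (u - v) \<noteq> 0" "cosh (u - v) \<noteq> 0"
  shows "\<i> / (tanh v * cosh (u - v) ^ 2) - lam_q u v * (- \<i> * tanh (u - v)) = \<i> * coth v"
    "\<i> / (coth (u - v) * sinh v ^ 2) - lam_q u v * (\<i> * coth v) = - \<i> * tanh (u - v)"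
    "- \<i> * tanh (u - v) - \<i> * coth v = (\<i> / (sinh v * cosh (u - v))) * (- cosh u)"
proof -
  have cu: "cosh u = cosh (u - v) * cosh v + sinh (u - v) * sinh v"
    using cosh_add[of "u - v" v] by simp
  show "\<i> / (tanh v * cosh (u - v) ^ 2) - lam_q u v * (- \<i> * tanh (u - v)) = \<i> * coth v"
    unfolding coth_def lam_q_def tanh_def
    by (rule q_id1[OF assms]) (simp add: cosh_square_eq)
  show "\<i> / (coth (u - v) * sinh v ^ 2) - lam_q u v * (\<i> * coth v) = - \<i> * tanh (u - v)"
    unfolding coth_def lam_q_def tanh_def
    by (rule q_id2[OF assms]) (simp add: cosh_square_eq)
  show "- \<i> * tanh (u - v) - \<i> * coth v = (\<i> / (sinh v * cosh (u - v))) * (- cosh u)"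
    unfolding coth_def tanh_def cu
    by (rule q_id3[OF assms])
qed

theorem mainTheorem4:
  fixes N :: nat and u v w :: complex
  assumes "sinh v \<noteq> 0" "cosh v \<noteq> 0" "sinh (u - v) \<noteq> 0" "cosh (u - v) \<noteq> 0"
      and "sinh w \<noteq> 0" "cosh w \<noteq> 0" "sinh (u - w) \<noteq> 0" "cosh (u - w) \<noteq> 0"
  shows "Mcl N u v * Mcl N u w = Mcl N u w * Mcl N u v \<and>
         Mq N u v * Mq N u w = Mq N u w * Mq N u v"
proof
  note cv = cl_conds[OF assms(1-4)] and cw = cl_conds[OF assms(5-8)]
  show "Mcl N u v * Mcl N u w = Mcl N u w * Mcl N u v"
    unfolding Mcl_G by (rule gen_comm[OF cv cw])
next
  note qv = q_conds[OF assms(1-4)] and qw = q_conds[OF assms(5-8)]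
  have T: "transpose_mat (Mq N u v) * transpose_mat (Mq N u w) =
           transpose_mat (Mq N u w) * transpose_mat (Mq N u v)"
    unfolding Mq_G by (rule gen_comm[OF qv qw])
  have cv: "Mq N u v \<in> carrier_mat (2*N) (2*N)" and cw: "Mq N u w \<in> carrier_mat (2*N) (2*N)"
    by (simp_all add: Mq_def)
  have "Mq N u v * Mq N u w = transpose_mat (transpose_mat (Mq N u w) * transpose_mat (Mq N u v))"
    unfolding transpose_mult[OF cv cw, symmetric] by simp
  also have "\<dots> = transpose_mat (transpose_mat (Mq N u v) * transpose_mat (Mq N u w))"
    by (simp add: T)
  also have "\<dots> = Mq N u w * Mq N u v"
    unfolding transpose_mult[OF cw cv, symmetric] by simp
  finally show "Mq N u v * Mq N u w = Mq N u w * Mq N u v" .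
qed


end
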